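(* Let $\alpha,p,q>0$ with $p>1$, let $F$ be the CDF of the Dagum distribution $GBP(\alpha,1,p,q)$ with mean $\mu=q\,\alpha\,B\!\left(\alpha+\frac1p,1-\frac1p\right)$, let $y>0$ and $w=\frac{y^p}{q^p+y^p}$. Then $$\mathrm{CRPS}(F\mid y) = 2\mu - q\,\frac{\Gamma\!\left(1-\frac1p\right)\Gamma\!\left(2\alpha+\frac1p\right)}{\Gamma(2\alpha)} - y + 2y\left(\frac{y^p}{q^p+y^p}\right)^{\alpha-1}\left(1-\frac{q^p}{q^p+y^p}\;{}_2F_1\!\left(1,\alpha;\alpha+\tfrac1p;w\right)\right).$$
   Context: The generalized Beta-prime distribution $GBP(\alpha,\beta,p,q)$ with parameters $\alpha,\beta,p,q>0$ is the distribution on $(0,\infty)$ with density $p_Z(z)=\frac{p}{qB(\alpha,\beta)}\frac{(z/q)^{\alpha p-1}}{(1+(z/q)^p)^{\alpha+\beta}}$ for $z>0$; the Dagum distribution is the case $\beta=1$, whose mean is finite iff $p>1$. For a CDF $F$ and observation $y\in\mathbb R$, $\mathrm{CRPS}(F\mid y)=\int_{\mathbb R}(F(x)-H(x-y))^2\,dx$ with $H$ the Heaviside step function. $B$ is the Beta function and ${}_2F_1$ the Gauss hypergeometric function. *)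

theory Defs
  imports "HOL-Analysis.Analysis"
begin

definition gbp_density :: "real \<Rightarrow> real \<Rightarrow> real \<Rightarrow> real \<Rightarrow> real \<Rightarrow> real" where
  "gbp_density \<alpha> \<beta> p q z =
     (if z > 0 then p / (q * Beta \<alpha> \<beta>) * ((z / q) powr (\<alpha> * p - 1)
        / (1 + (z / q) powr p) powr (\<alpha> + \<beta>)) else 0)"

definition gbp_cdf :: "real \<Rightarrow> real \<Rightarrow> real \<Rightarrow> real \<Rightarrow> real \<Rightarrow> real" where
  "gbp_cdf \<alpha> \<beta> p q x = integral {..x} (gbp_density \<alpha> \<beta> p q)"

definition dagum_cdf :: "real \<Rightarrow> real \<Rightarrow> real \<Rightarrow> real \<Rightarrow> real" where
  "dagum_cdf \<alpha> p q = gbp_cdf \<alpha> 1 p q"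

definition heaviside :: "real \<Rightarrow> real" where
  "heaviside t = (if t \<ge> 0 then 1 else 0)"

definition crps :: "(real \<Rightarrow> real) \<Rightarrow> real \<Rightarrow> real" where
  "crps F y = integral UNIV (\<lambda>x. (F x - heaviside (x - y))\<^sup>2)"

definition hyp2F1 :: "real \<Rightarrow> real \<Rightarrow> real \<Rightarrow> real \<Rightarrow> real" where
  "hyp2F1 a b c z = (\<Sum>n. pochhammer a n * pochhammer b n / (pochhammer c n * fact n) * z ^ n)"

end

theory Submission
  imports Defs "HOL-Real_Asymp.Real_Asymp"
begin


definition ca :: "real \<Rightarrow> real \<Rightarrow> nat \<Rightarrow> real" where
  "ca al c n = pochhammer al n / pochhammer c n"
definition cb :: "real \<Rightarrow> real \<Rightarrow> nat \<Rightarrow> real" where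
  "cb al c n = ca al c n / (c + real n)"

context
  fixes al c :: real
  assumes al: "al > 0" and cal: "c > al"
begin

lemma ca_Suc: "ca al c (Suc n) = ca al c n * (al + n) / (c + n)"
  unfolding ca_def using al cal
  by (simp add: pochhammer_Suc field_simps)

lemma ca_pos: "ca al c n > 0"
  unfolding ca_def using al cal by (simp add: pochhammer_pos)

lemma ca_le1: "ca al c n \<le> 1"
proof (induction n)
  case 0 then show ?case by (simp add: ca_def)
next
  case (Suc n)
  have "ca al c (Suc n) = ca al c n * ((al + n) / (c + n))" by (simp add: ca_Suc)
  also have "\<dots> \<le> 1 * 1"
    using Suc ca_pos[of n] al cal by (intro mult_mono) auto
  finally show ?case by simp
qed

lemma cb_Suc_rel: "(al + real n) * cb al c n = ca al c (Suc n)"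
  using al cal by (simp add: cb_def ca_Suc)

lemma bounded_summable:
  fixes f :: "nat \<Rightarrow> real"
  assumes "\<And>n. \<bar>f n\<bar> \<le> M" "\<bar>z\<bar> < 1"
  shows "summable (\<lambda>n. f n * z ^ n)"
proof (rule summable_comparison_test[of _ "\<lambda>n. M * \<bar>z\<bar> ^ n"])
  show "\<exists>N. \<forall>n\<ge>N. norm (f n * z ^ n) \<le> M * \<bar>z\<bar> ^ n"
    using assms by (auto simp: abs_mult power_abs intro!: mult_right_mono)
  show "summable (\<lambda>n. M * \<bar>z\<bar> ^ n)"
    using assms by (intro summable_mult summable_geometric) auto
qed

lemma sum_a: "\<bar>z\<bar> < 1 \<Longrightarrow> summable (\<lambda>n. ca al c n * z ^ n)"
  by (rule bounded_summable[where M=1]) (simp_all add: abs_of_pos[OF ca_pos] ca_le1)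

lemma cb_pos: "cb al c n > 0" using ca_pos[of n] al cal by (simp add: cb_def)

lemma cb_le: "cb al c n \<le> 1 / c"
proof -
  have "cb al c n \<le> 1 / (c + n)" unfolding cb_def using ca_le1[of n] al cal
    by (intro divide_right_mono) auto
  also have "\<dots> \<le> 1 / c" using al cal by (intro divide_left_mono) auto
  finally show ?thesis .
qed

lemma sum_b: "\<bar>z\<bar> < 1 \<Longrightarrow> summable (\<lambda>n. cb al c n * z ^ n)"
  by (rule bounded_summable[where M="1/c"]) (use cb_pos cb_le in \<open>auto simp: abs_le_iff less_imp_le\<close>)

lemma sum_T: "\<bar>z\<bar> < 1 \<Longrightarrow> summable (\<lambda>n. ((al + n) * cb al c n) * z ^ n)"
  unfolding cb_Suc_rel
  by (rule bounded_summable[where M=1]) (use ca_pos ca_le1 in \<open>auto simp: abs_le_iff less_imp_le\<close>)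

lemma sum_N: "\<bar>z\<bar> < 1 \<Longrightarrow> summable (\<lambda>n. (real n * cb al c n) * z ^ n)"
proof (rule bounded_summable[where M=1])
  fix n
  have "real n * cb al c n \<le> (al + n) * cb al c n"
    using al cb_pos[of n] by (intro mult_right_mono) auto
  also have "\<dots> \<le> 1" unfolding cb_Suc_rel by (rule ca_le1)
  finally show "\<bar>real n * cb al c n\<bar> \<le> 1" using cb_pos[of n] by simp
qed

definition "HH z = (\<Sum>n. ca al c n * z ^ n)"
definition "SS z = (\<Sum>n. cb al c n * z ^ n)"

lemma I1: assumes "\<bar>z\<bar> < 1"
  shows "(c - al) * SS z + (\<Sum>n. ((al + n) * cb al c n) * z ^ n) = HH z"
proof -
  have "(\<lambda>n. (c - al) * (cb al c n * z ^ n) + ((al + n) * cb al c n) * z ^ n) sums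
        ((c - al) * SS z + (\<Sum>n. ((al + n) * cb al c n) * z ^ n))"
    unfolding SS_def
    by (intro sums_add sums_mult summable_sums sum_b sum_T assms)
  moreover have "(\<lambda>n. (c - al) * (cb al c n * z ^ n) + ((al + n) * cb al c n) * z ^ n)
      = (\<lambda>n. ca al c n * z ^ n)"
  proof
    fix n
    have "(c - al) * (cb al c n * z ^ n) + ((al + n) * cb al c n) * z ^ n = ((c + n) * cb al c n) * z ^ n"
      by (simp add: algebra_simps)
    also have "(c + n) * cb al c n = ca al c n" using al cal by (simp add: cb_def)
    finally show "(c - al) * (cb al c n * z ^ n) + ((al + n) * cb al c n) * z ^ n = ca al c n * z ^ n" .
  qed
  ultimately show ?thesis unfolding HH_def using sums_unique by metis
qed

lemma I2: assumes "\<bar>z\<bar> < 1"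
  shows "z * (\<Sum>n. ((al + n) * cb al c n) * z ^ n) = HH z - 1"
proof -
  have "(\<lambda>n. z * (((al + n) * cb al c n) * z ^ n)) sums (z * (\<Sum>n. ((al + n) * cb al c n) * z ^ n))"
    by (intro sums_mult summable_sums sum_T assms)
  moreover have "(\<lambda>n. z * (((al + n) * cb al c n) * z ^ n)) = (\<lambda>n. ca al c (Suc n) * z ^ Suc n)"
    unfolding cb_Suc_rel by (auto simp: field_simps)
  ultimately have "(\<lambda>n. ca al c n * z ^ n) sums (z * (\<Sum>n. ((al + n) * cb al c n) * z ^ n) + ca al c 0 * z ^ 0)"
    using sums_Suc_iff[of "\<lambda>n. ca al c n * z ^ n"] by simp
  then have "HH z = z * (\<Sum>n. ((al + n) * cb al c n) * z ^ n) + 1"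
    unfolding HH_def by (simp add: ca_def sums_iff)
  then show ?thesis by simp
qed

lemma I3: assumes "\<bar>z\<bar> < 1"
  shows "1 - (1 - z) * HH z = (c - al) * z * SS z"
proof -
  define T where "T = (\<Sum>n. ((al + n) * cb al c n) * z ^ n)"
  have e1: "(c - al) * SS z + T = HH z" and e2: "z * T = HH z - 1"
    using I1[OF assms] I2[OF assms] unfolding T_def by auto
  have "z * ((c - al) * SS z + T) = z * HH z" using e1 by simp
  then show ?thesis using e2 by (simp add: algebra_simps)
qed

lemma SS_deriv: assumes "\<bar>z\<bar> < 1"
  shows "(SS has_field_derivative (\<Sum>n. diffs (cb al c) n * z ^ n)) (at z)"
  unfolding SS_def[abs_def]
  by (rule termdiffs_strong'[where K=1]) (use sum_b assms in auto)

lemma SS_deriv_N: assumes "\<bar>z\<bar> < 1"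
  shows "z * (\<Sum>n. diffs (cb al c) n * z ^ n) = (\<Sum>n. (real n * cb al c n) * z ^ n)"
proof -
  have "(\<lambda>n. (real n * cb al c n) * z ^ n) sums (\<Sum>n. (real n * cb al c n) * z ^ n)"
    by (intro summable_sums sum_N assms)
  then have "(\<lambda>n. (real (Suc n) * cb al c (Suc n)) * z ^ Suc n) sums (\<Sum>n. (real n * cb al c n) * z ^ n)"
    using sums_Suc_iff[of "\<lambda>n. (real n * cb al c n) * z ^ n"] by simp
  moreover have "(\<lambda>n. (real (Suc n) * cb al c (Suc n)) * z ^ Suc n) = (\<lambda>n. z * (diffs (cb al c) n * z ^ n))"
    by (auto simp: diffs_def field_simps)
  ultimately have "(\<lambda>n. z * (diffs (cb al c) n * z ^ n)) sums (\<Sum>n. (real n * cb al c n) * z ^ n)" by simp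
  moreover have "(\<lambda>n. z * (diffs (cb al c) n * z ^ n)) sums (z * (\<Sum>n. diffs (cb al c) n * z ^ n))"
  proof (intro sums_mult summable_sums)
    obtain K where K: "\<bar>z\<bar> < K" "K < 1" using assms dense by blast
    show "summable (\<lambda>n. diffs (cb al c) n * z ^ n)"
      apply (rule termdiff_converges[where K=K])
      using K apply simp
      using sum_b K by auto
  qed
  ultimately show ?thesis using sums_unique2 by blast
qed

lemma T_eq: assumes "\<bar>z\<bar> < 1"
  shows "(\<Sum>n. ((al + n) * cb al c n) * z ^ n) = al * SS z + (\<Sum>n. (real n * cb al c n) * z ^ n)"
proof -
  have "(\<lambda>n. al * (cb al c n * z ^ n) + (real n * cb al c n) * z ^ n) sums (al * SS z + (\<Sum>n. (real n * cb al c n) * z ^ n))"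
    unfolding SS_def by (intro sums_add sums_mult summable_sums sum_b sum_N assms)
  moreover have "(\<lambda>n. al * (cb al c n * z ^ n) + (real n * cb al c n) * z ^ n) = (\<lambda>n. ((al + n) * cb al c n) * z ^ n)"
    by (auto simp: field_simps)
  ultimately show ?thesis using sums_unique by metis
qed

lemma SS_ode: assumes "\<bar>z\<bar> < 1"
  shows "(c - al) * SS z + (1 - z) * (al * SS z + z * (\<Sum>n. diffs (cb al c) n * z ^ n)) = 1"
proof -
  define T where "T = (\<Sum>n. ((al + n) * cb al c n) * z ^ n)"
  have e1: "(c - al) * SS z + T = HH z" and e2: "z * T = HH z - 1"
    and e3: "T = al * SS z + z * (\<Sum>n. diffs (cb al c) n * z ^ n)"
    using I1[OF assms] I2[OF assms] T_eq[OF assms] SS_deriv_N[OF assms] unfolding T_def by auto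
  show ?thesis unfolding e3[symmetric] using e1 e2 by (simp add: algebra_simps)
qed

end


definition Wf :: "real \<Rightarrow> real \<Rightarrow> real \<Rightarrow> real" where
  "Wf p q x = (x/q) powr p / (1 + (x/q) powr p)"

context
  fixes p q :: real
  assumes p: "p > 0" and q: "q > 0"
begin

lemma W_pos: "x > 0 \<Longrightarrow> 0 < Wf p q x"
  using q by (simp add: Wf_def add_pos_pos)
lemma W_lt1: "Wf p q x < 1"
  by (simp add: Wf_def add_pos_nonneg)
lemma W_nonneg: "0 \<le> Wf p q x"
  by (simp add: Wf_def add_pos_nonneg)
lemma W_0: "Wf p q 0 = 0"
  by (simp add: Wf_def)
lemma onev_pos: "1 + (x/q) powr p > 0"
  by (simp add: add_pos_nonneg)
lemma onev_nz: "1 + (x/q) powr p \<noteq> 0"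
  using onev_pos[of x] by linarith
lemma one_minus_W: "1 - Wf p q x = 1 / (1 + (x/q) powr p)"
  using onev_nz[of x] by (simp add: Wf_def field_simps)

lemma v_deriv: assumes "x > 0"
  shows "((\<lambda>x. (x/q) powr p) has_real_derivative p * (x/q) powr p / x) (at x)"
proof -
  have "((\<lambda>x. (x/q) powr p) has_real_derivative p * (x/q) powr (p - 1) * (1/q)) (at x)"
    using assms q by (auto intro!: derivative_eq_intros)
  moreover have "p * (x/q) powr (p - 1) * (1/q) = p * (x/q) powr p / x"
    using assms q by (simp add: powr_diff field_simps)
  ultimately show ?thesis by simp
qed

lemma W_deriv: assumes "x > 0"
  shows "(Wf p q has_real_derivative p / x * Wf p q x * (1 - Wf p q x)) (at x)"
proof -
  define v where "v = (x/q) powr p"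
  have v: "v \<ge> 0" unfolding v_def by simp
  have "((\<lambda>x. (x/q) powr p / (1 + (x/q) powr p)) has_real_derivative
     ((p * v / x) * (1 + v) - v * (p * v / x)) / ((1 + v) * (1 + v))) (at x)"
  proof -
    have dd: "((\<lambda>x. 1 + (x/q) powr p) has_real_derivative p * v / x) (at x)"
      using DERIV_add[OF DERIV_const v_deriv[OF assms]] unfolding v_def by simp
    show ?thesis unfolding v_def
      by (rule DERIV_divide[OF v_deriv[OF assms] dd[unfolded v_def]]) (simp add: onev_nz)
  qed
  moreover have "((p * v / x) * (1 + v) - v * (p * v / x)) / ((1 + v) * (1 + v)) =
      p / x * Wf p q x * (1 - Wf p q x)"
    unfolding one_minus_W using v assms by (simp add: Wf_def v_def[symmetric] field_simps)
  ultimately show ?thesis unfolding Wf_def[abs_def] by (simp add: v_def)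
qed

lemma Wpow_deriv: assumes "x > 0"
  shows "((\<lambda>x. Wf p q x powr b) has_real_derivative b * p / x * Wf p q x powr b * (1 - Wf p q x)) (at x)"
proof -
  have "((\<lambda>x. Wf p q x powr b) has_real_derivative b * Wf p q x powr (b - 1) * (p / x * Wf p q x * (1 - Wf p q x))) (at x)"
    using DERIV_fun_powr[OF W_deriv[OF assms] W_pos[OF assms]] by simp
  moreover have "b * w powr (b - 1) * (p / x * w * (1 - w)) =
       b * p / x * w powr b * (1 - w)" if "w > 0" for w
    using that assms by (simp add: powr_diff field_simps)
  note this[OF W_pos[OF assms]]
  ultimately show ?thesis by metis
qed

lemma W_cont: "A \<subseteq> {0..} \<Longrightarrow> continuous_on A (Wf p q)"
  unfolding Wf_def[abs_def] using p q
  by (intro continuous_intros continuous_on_powr') (auto simp: onev_nz)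

lemma Wpow_cont: "A \<subseteq> {0..} \<Longrightarrow> b > 0 \<Longrightarrow> continuous_on A (\<lambda>x. Wf p q x powr b)"
  by (intro continuous_on_powr' W_cont continuous_intros) (auto simp: W_nonneg)

lemma W_eq: "x > 0 \<Longrightarrow> Wf p q x = x powr p / (q powr p + x powr p)"
  using q by (simp add: Wf_def powr_divide field_simps add_pos_pos)


end


definition gfun :: "real \<Rightarrow> real \<Rightarrow> real \<Rightarrow> real \<Rightarrow> real" where
  "gfun p q b x = b * p * Wf p q x powr b * (1 - Wf p q x)"
definition phi :: "real \<Rightarrow> real \<Rightarrow> real \<Rightarrow> real" where
  "phi p q t = q * (t / (1 - t)) powr (1/p)"
definition phid :: "real \<Rightarrow> real \<Rightarrow> real \<Rightarrow> real" where
  "phid p q t = q * (1/p) * (t / (1 - t)) powr (1/p - 1) / (1 - t)^2"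

context
  fixes p q :: real
  assumes p: "p > 1" and q: "q > 0"
begin

lemma gfun_nonneg: "b > 0 \<Longrightarrow> 0 \<le> gfun p q b x"
  unfolding gfun_def using p q W_lt1[of p q x] by auto

lemma gfun_cont: "b > 0 \<Longrightarrow> continuous_on {0..} (gfun p q b)"
  unfolding gfun_def[abs_def] using p q
  by (intro continuous_intros Wpow_cont W_cont) auto

lemma phi_deriv: assumes "0 < t" "t < 1"
  shows "(phi p q has_real_derivative phid p q t) (at t)"
proof -
  have d1: "((\<lambda>t. t / (1 - t)) has_real_derivative 1 / (1 - t)^2) (at t)"
  proof -
    have "((\<lambda>t. t / (1 - t)) has_real_derivative (1 * (1 - t) - t * (0 - 1)) / ((1 - t) * (1 - t))) (at t)"
      using assms by (intro DERIV_divide derivative_intros) auto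
    then show ?thesis by (simp add: power2_eq_square)
  qed
  have pos: "t / (1 - t) > 0" using assms by simp
  have "((\<lambda>t. q * (t / (1 - t)) powr (1/p)) has_real_derivative
       q * ((1/p) * (t / (1 - t)) powr (1/p - of_nat 1) * (1 / (1 - t)^2))) (at t)"
    by (intro DERIV_cmult DERIV_fun_powr[OF d1 pos])
  then show ?thesis unfolding phi_def[abs_def] phid_def by simp
qed

lemma phid_nonneg: "0 \<le> t \<Longrightarrow> t \<le> 1 \<Longrightarrow> 0 \<le> phid p q t"
  unfolding phid_def using p q by auto

lemma W_phi: assumes "0 < t" "t < 1" shows "Wf p q (phi p q t) = t"
proof -
  have "(phi p q t / q) powr p = t / (1 - t)"
    unfolding phi_def using assms p q by (simp add: powr_powr)
  then show ?thesis unfolding Wf_def using assms by (simp only:) (simp add: field_simps)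
qed

lemma phi_pos: "0 < t \<Longrightarrow> t < 1 \<Longrightarrow> phi p q t > 0"
  unfolding phi_def using q by simp

lemma prod_eq: assumes t: "0 < t" "t < 1"
  shows "gfun p q b (phi p q t) * phid p q t = b * q * (t powr ((b + 1/p) - 1) * (1 - t) powr ((1 - 1/p) - 1))"
proof -
  define u where "u = 1 - t"
  have u: "u > 0" using t by (simp add: u_def)
  have e1: "(t / u) powr (1/p - 1) = t powr (1/p - 1) / u powr (1/p - 1)"
    using t u by (simp add: powr_divide)
  have e2: "u powr (1/p - 1) = u powr (1/p) / u" using u by (simp add: powr_diff)
  have e3: "t powr b * t powr (1/p - 1) = t powr ((b + 1/p) - 1)"
    using t by (simp add: powr_add[symmetric] algebra_simps)
  have e4: "u powr ((1 - 1/p) - 1) = 1 / u powr (1/p)"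
    using u by (simp add: powr_minus_divide)
  have "gfun p q b (phi p q t) * phid p q t =
        b * p * t powr b * u * (q * (1/p) * (t powr (1/p - 1) / (u powr (1/p) / u)) / u^2)"
    unfolding gfun_def W_phi[OF t] phid_def u_def[symmetric] e1 e2 by simp
  also have "\<dots> = b * q * ((t powr b * t powr (1/p - 1)) * (1 / u powr (1/p)))"
    using p u by (simp add: field_simps power2_eq_square)
  finally show ?thesis unfolding e3 using u by (simp add: powr_minus_divide u_def)
qed

lemma phi_lim0: "(phi p q \<longlongrightarrow> 0) (at_right 0)"
  unfolding phi_def[abs_def] using p q by real_asymp

lemma phi_lim1: "filterlim (phi p q) at_top (at_left 1)"
  unfolding phi_def[abs_def] using p q by real_asymp

lemma beta_int:
  assumes b: "b > 0"
  shows "set_integrable lborel (einterval 0 1) (\<lambda>t. gfun p q b (phi p q t) * phid p q t)"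
    and "(LBINT t=0..1. gfun p q b (phi p q t) * phid p q t) = b * q * Beta (b + 1/p) (1 - 1/p)"
proof -
  define f where "f t = t powr ((b + 1/p) - 1) * (1 - t) powr ((1 - 1/p) - 1)" for t
  have ab: "b + 1/p > 0" "1 - 1/p > 0" using b p by (simp_all add: add_pos_pos)
  have "set_integrable lborel {0..1} f" unfolding f_def by (rule integrable_Beta[OF ab])
  then have i1: "set_integrable lborel {0<..<1} f"
    by (rule set_integrable_subset) auto
  then have i2: "set_integrable lborel {0<..<1} (\<lambda>t. b * q * f t)"
    by (intro set_integrable_mult_right) auto
  have ee: "einterval 0 1 = {0<..<(1::real)}"
    by (simp add: zero_ereal_def one_ereal_def)
  show si: "set_integrable lborel (einterval 0 1) (\<lambda>t. gfun p q b (phi p q t) * phid p q t)"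
    unfolding ee using i2 by (rule set_integrable_cong[THEN iffD1, rotated -1]) (auto simp: prod_eq f_def)
  have "(LBINT t=0..1. gfun p q b (phi p q t) * phid p q t) =
        integral (einterval 0 1) (\<lambda>t. gfun p q b (phi p q t) * phid p q t)"
    by (rule interval_integral_eq_integral'[OF _ si]) simp
  also have "\<dots> = integral {0<..<1} (\<lambda>t. b * q * f t)"
    unfolding ee by (rule integral_cong) (auto simp: prod_eq f_def)
  also have "\<dots> = b * q * Beta (b + 1/p) (1 - 1/p)"
  proof -
    have "(f has_integral Beta (b + 1/p) (1 - 1/p)) {0<..<1}"
      using has_integral_Beta_real[OF ab] unfolding f_def by (simp add: has_integral_Icc_iff_Ioo)
    then show ?thesis by (simp add: integral_unique has_integral_mult_right)
  qed
  finally show "(LBINT t=0..1. gfun p q b (phi p q t) * phid p q t) = b * q * Beta (b + 1/p) (1 - 1/p)" .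
qed

lemma E_lebesgue:
  assumes b: "b > 0"
  shows "set_integrable lborel (einterval 0 \<infinity>) (gfun p q b)"
    and "(LBINT x=0..\<infinity>. gfun p q b x) = b * q * Beta (b + 1/p) (1 - 1/p)"
proof -
  have contf: "isCont (gfun p q b) (phi p q t)" if "0 < t" "t < 1" for t
  proof (rule continuous_on_interior[OF gfun_cont[OF b]])
    show "phi p q t \<in> interior {0..}" using phi_pos[OF that] by simp
  qed
  have contg: "isCont (phid p q) t" if "0 < t" "t < 1" for t
    unfolding phid_def[abs_def] using that by (intro continuous_intros) auto
  note sub = interval_integral_substitution_nonneg[of 0 1 "phi p q" "phid p q" "gfun p q b" 0 \<infinity>]
  have hyps: "(0::ereal) < 1"
      "\<And>x. 0 < ereal x \<Longrightarrow> ereal x < 1 \<Longrightarrow> (phi p q has_real_derivative phid p q x) (at x)"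
      "\<And>x. 0 < ereal x \<Longrightarrow> ereal x < 1 \<Longrightarrow> isCont (gfun p q b) (phi p q x)"
      "\<And>x. 0 < ereal x \<Longrightarrow> ereal x < 1 \<Longrightarrow> isCont (phid p q) x"
      "\<And>x. 0 < ereal x \<Longrightarrow> ereal x < 1 \<Longrightarrow> 0 \<le> gfun p q b (phi p q x)"
      "\<And>x. 0 \<le> ereal x \<Longrightarrow> ereal x \<le> 1 \<Longrightarrow> 0 \<le> phid p q x"
      "((ereal \<circ> phi p q \<circ> real_of_ereal) \<longlongrightarrow> 0) (at_right 0)"
      "((ereal \<circ> phi p q \<circ> real_of_ereal) \<longlongrightarrow> \<infinity>) (at_left 1)"
    using phi_deriv contf contg gfun_nonneg[OF b] phid_nonneg phi_lim0 phi_lim1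
    by (auto simp: zero_ereal_def one_ereal_def ereal_tendsto_simps)
  show "set_integrable lborel (einterval 0 \<infinity>) (gfun p q b)"
    using sub(1)[OF hyps beta_int(1)[OF b]] .
  show "(LBINT x=0..\<infinity>. gfun p q b x) = b * q * Beta (b + 1/p) (1 - 1/p)"
    using sub(2)[OF hyps beta_int(1)[OF b]] beta_int(2)[OF b] by simp
qed

lemma E_facts:
  assumes b: "b > 0"
  shows "set_integrable lborel {0..} (gfun p q b)"
    and "((\<lambda>B. integral {0..B} (gfun p q b)) \<longlongrightarrow> b * q * Beta (b + 1/p) (1 - 1/p)) at_top"
proof -
  have s1: "set_integrable lborel {0<..} (gfun p q b)"
    using E_lebesgue(1)[OF b] by (simp add: zero_ereal_def)
  have "set_integrable lborel ({0<..} \<union> {0}) (gfun p q b)"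
    by (rule set_integrable_Un[OF s1]) auto
  moreover have "{0<..} \<union> {0} = {0::real..}" by auto
  ultimately show si: "set_integrable lborel {0..} (gfun p q b)" by simp
  have "(LINT x:{0..}|lborel. gfun p q b x) = (LINT x:{0<..}|lborel. gfun p q b x)"
    by (rule set_integral_discrete_difference[where X="{0}"]) auto
  also have "\<dots> = (LBINT x=0..\<infinity>. gfun p q b x)"
    by (simp add: interval_lebesgue_integral_def zero_ereal_def)
  finally have val: "(LINT x:{0..}|lborel. gfun p q b x) = b * q * Beta (b + 1/p) (1 - 1/p)"
    using E_lebesgue(2)[OF b] by simp
  have "((\<lambda>B. LINT x:{0..B}|lborel. gfun p q b x) \<longlongrightarrow> (LINT x:{0..}|lborel. gfun p q b x)) at_top"
    by (rule tendsto_set_lebesgue_integral_at_top[OF _ si]) auto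
  moreover have "(LINT x:{0..B}|lborel. gfun p q b x) = integral {0..B} (gfun p q b)" for B
    by (rule set_borel_integral_eq_integral(2), rule set_integrable_subset[OF si]) auto
  ultimately show "((\<lambda>B. integral {0..B} (gfun p q b)) \<longlongrightarrow> b * q * Beta (b + 1/p) (1 - 1/p)) at_top"
    using val by simp
qed

end


lemma density_eq: assumes "x > 0" "al > 0" "p > 0" "q > 0"
  shows "gbp_density al 1 p q x = al * p / x * Wf p q x powr al * (1 - Wf p q x)"
proof -
  define v where "v = (x/q) powr p"
  define u where "u = x/q"
  have v: "v > 0" unfolding v_def using assms by simp
  have u: "u > 0" unfolding u_def using assms by simp
  have B: "Beta al 1 = 1 / al"
  proof -
    have "al \<notin> \<int>\<^sub>\<le>\<^sub>0" using assms nonpos_Ints_nonpos by force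
    then have "Gamma (al + 1) = al * Gamma al" by (rule Gamma_plus1)
    moreover have g: "Gamma al \<noteq> 0" using assms Gamma_real_pos[of al] by linarith
    ultimately show ?thesis using assms g by (simp add: Beta_def)
  qed
  have e1: "(x/q) powr (al * p - 1) = v powr al / u"
    unfolding u_def[symmetric] v_def u_def[symmetric] using u
    by (simp add: powr_diff powr_powr mult.commute)
  have e2: "(1 + v) powr (al + 1) = (1 + v) powr al * (1 + v)"
    using v by (simp add: powr_add)
  have e3: "Wf p q x powr al = v powr al / (1 + v) powr al"
    unfolding Wf_def v_def[symmetric] using v by (simp add: powr_divide)
  have e4: "1 - Wf p q x = 1 / (1 + v)" unfolding one_minus_W[OF assms(3,4)] v_def ..
  have gen: "p / (q * (1 / al)) * ((A / u) / (C * (1 + v))) = al * p / x * (A / C) * (1 / (1 + v))"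
    if "C > 0" for A C
    using that assms v unfolding u_def by (simp add: field_simps)
  have "gbp_density al 1 p q x = p / (q * (1 / al)) * ((v powr al / u) / ((1 + v) powr al * (1 + v)))"
    unfolding gbp_density_def v_def[symmetric] B e1 e2 using assms by simp
  also have "\<dots> = al * p / x * (v powr al / (1 + v) powr al) * (1 / (1 + v))"
    by (rule gen) (use v in simp)
  finally show ?thesis unfolding e3 e4 .
qed



lemma cdf_eq:
  assumes al: "al > 0" and p: "p > 0" and q: "q > 0"
  shows "dagum_cdf al p q x = (if x \<ge> 0 then Wf p q x powr al else 0)"
proof (cases "x \<ge> 0")
  case True
  have ftc: "(gbp_density al 1 p q has_integral (Wf p q x powr al - Wf p q 0 powr al)) {0..x}"
  proof (rule fundamental_theorem_of_calculus_interior[OF True])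
    show "continuous_on {0..x} (\<lambda>x. Wf p q x powr al)"
      using p q al by (intro Wpow_cont) auto
    fix t assume t: "t \<in> {0<..<x}"
    then have "((\<lambda>x. Wf p q x powr al) has_real_derivative gbp_density al 1 p q t) (at t)"
      using Wpow_deriv[OF p q, of t al] density_eq[of t al p q] al p q by simp
    then show "((\<lambda>x. Wf p q x powr al) has_vector_derivative gbp_density al 1 p q t) (at t)"
      by (simp add: has_real_derivative_iff_has_vector_derivative)
  qed
  have z: "(gbp_density al 1 p q has_integral 0) {..0}"
    by (rule has_integral_is_0) (auto simp: gbp_density_def)
  have "(gbp_density al 1 p q has_integral (0 + (Wf p q x powr al - Wf p q 0 powr al))) ({..0} \<union> {0..x})"
    by (rule has_integral_Un[OF z ftc]) (auto intro: negligible_subset[of "{0}"])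
  moreover have "{..0} \<union> {0..x} = {..x}" using True by auto
  ultimately have "(gbp_density al 1 p q has_integral (Wf p q x powr al)) {..x}"
    using al by (simp add: W_0[OF p q])
  then show ?thesis using True unfolding dagum_cdf_def gbp_cdf_def by (simp add: integral_unique)
next
  case False
  have "(gbp_density al 1 p q has_integral 0) {..x}"
    by (rule has_integral_is_0) (use False in \<open>auto simp: gbp_density_def\<close>)
  then show ?thesis using False unfolding dagum_cdf_def gbp_cdf_def by (simp add: integral_unique)
qed

definition Dfun :: "real \<Rightarrow> real \<Rightarrow> real \<Rightarrow> real \<Rightarrow> real" where
  "Dfun al p q x = (1/p) * x * Wf p q x powr al * SS al (al + 1/p) (Wf p q x)"

lemma SS_cont:
  assumes al: "al > 0" and p: "p > 0"
  shows "continuous_on {0..<1} (SS al (al + 1/p))"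
proof -
  have "isCont (SS al (al + 1/p)) z" if "z \<in> {0..<1}" for z
    using SS_deriv[of al "al + 1/p" z] that al p by (intro DERIV_isCont) auto
  then show ?thesis by (intro continuous_at_imp_continuous_on) auto
qed

lemma D_deriv:
  assumes al: "al > 0" and p: "p > 0" and q: "q > 0" and x: "x > 0"
  shows "(Dfun al p q has_real_derivative Wf p q x powr al) (at x)"
proof -
  define c where "c = al + 1/p"
  have c: "al < c" "c - al = 1/p" using p by (auto simp: c_def)
  define w where "w = Wf p q x"
  have w: "0 < w" "w < 1" unfolding w_def using W_pos[OF p q x] W_lt1[OF p q] by auto
  define S' where "S' = (\<Sum>n. diffs (cb al c) n * w ^ n)"
  have dS: "(SS al c has_real_derivative S') (at w)"
    unfolding S'_def using SS_deriv[OF al c(1), of w] w by simp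
  have dW: "(Wf p q has_real_derivative p / x * w * (1 - w)) (at x)"
    using W_deriv[OF p q x] unfolding w_def .
  have dSW: "((\<lambda>x. SS al c (Wf p q x)) has_real_derivative S' * (p / x * w * (1 - w))) (at x)"
    using DERIV_chain2[OF dS[unfolded w_def] dW[unfolded w_def]] unfolding w_def .
  have dA: "((\<lambda>x. Wf p q x powr al) has_real_derivative al * p / x * w powr al * (1 - w)) (at x)"
    using Wpow_deriv[OF p q x, of al] unfolding w_def .
  note d = DERIV_mult[OF DERIV_mult[OF DERIV_cmult[OF DERIV_ident, of "1/p"] dA] dSW]
  have ode: "(c - al) * SS al c w + (1 - w) * (al * SS al c w + w * S') = 1"
    unfolding S'_def using SS_ode[OF al c(1), of w] w by simp
  have "((1/p) * 1 * w powr al + (al * p / x * w powr al * (1 - w)) * ((1/p) * x)) * SS al c w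
      + (S' * (p / x * w * (1 - w))) * ((1/p) * x * w powr al)
      = w powr al * ((c - al) * SS al c w + (1 - w) * (al * SS al c w + w * S'))"
    unfolding c(2) using p x by (simp add: field_simps)
  also have "\<dots> = w powr al" using ode by simp
  finally show ?thesis using d unfolding Dfun_def[abs_def] c_def w_def by simp
qed

lemma D_cont:
  assumes al: "al > 0" and p: "p > 0" and q: "q > 0"
  shows "continuous_on {0..} (Dfun al p q)"
proof -
  have "continuous_on {0..} (\<lambda>x. SS al (al + 1/p) (Wf p q x))"
    by (rule continuous_on_compose2[OF SS_cont[OF al p] W_cont[OF p q]])
       (auto simp: W_nonneg[OF p q] W_lt1[OF p q])
  then show ?thesis unfolding Dfun_def[abs_def]
    by (intro continuous_intros Wpow_cont[OF p q] al) auto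
qed

lemma D_integral:
  assumes al: "al > 0" and p: "p > 0" and q: "q > 0" and y: "y \<ge> 0"
  shows "((\<lambda>x. Wf p q x powr al) has_integral Dfun al p q y) {0..y}"
proof -
  have "((\<lambda>x. Wf p q x powr al) has_integral (Dfun al p q y - Dfun al p q 0)) {0..y}"
  proof (rule fundamental_theorem_of_calculus_interior[OF y])
    show "continuous_on {0..y} (Dfun al p q)"
      by (rule continuous_on_subset[OF D_cont[OF al p q]]) auto
    fix t assume "t \<in> {0<..<y}"
    then show "(Dfun al p q has_vector_derivative Wf p q t powr al) (at t)"
      using D_deriv[OF al p q, of t] by (simp add: has_real_derivative_iff_has_vector_derivative)
  qed
  then show ?thesis by (simp add: Dfun_def)
qed



definition Pf :: "real \<Rightarrow> real \<Rightarrow> real \<Rightarrow> real \<Rightarrow> real" where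
  "Pf p q b x = integral {0..x} (gfun p q b)"
definition Psi :: "real \<Rightarrow> real \<Rightarrow> real \<Rightarrow> real \<Rightarrow> real" where
  "Psi al p q x = x * (1 - Wf p q x powr al)^2 + 2 * Pf p q al x - Pf p q (2*al) x"

context
  fixes al p q :: real
  assumes al: "al > 0" and p1: "p > 1" and q: "q > 0"
begin

lemma p: "p > 0" using p1 by simp

lemma P_deriv: assumes b: "b > 0" and x: "x > 0"
  shows "(Pf p q b has_real_derivative gfun p q b x) (at x)"
proof -
  have c: "continuous_on {0..x+1} (gfun p q b)"
    by (rule continuous_on_subset[OF gfun_cont[OF p1 q b]]) auto
  have "((\<lambda>u. integral {0..u} (gfun p q b)) has_vector_derivative gfun p q b x) (at x within {0..x+1})"
    by (rule integral_has_vector_derivative[OF c]) (use x in auto)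
  moreover have "at x within {0..x+1} = at x"
    by (rule at_within_interior) (use x in auto)
  ultimately show ?thesis unfolding Pf_def[abs_def]
    by (simp add: has_real_derivative_iff_has_vector_derivative)
qed

lemma P_cont: assumes b: "b > 0" shows "continuous_on {0..B} (Pf p q b)"
  unfolding Pf_def[abs_def]
  by (rule indefinite_integral_continuous_1, rule integrable_continuous_interval,
      rule continuous_on_subset[OF gfun_cont[OF p1 q b]]) auto

lemma Psi_deriv: assumes x: "x > 0"
  shows "(Psi al p q has_real_derivative (1 - Wf p q x powr al)^2) (at x)"
proof -
  note dA = Wpow_deriv[OF p q x, of al]
  note d1 = DERIV_mult[OF DERIV_ident DERIV_power[OF DERIV_diff[OF DERIV_const[where k=1] dA], where n=2]]
  have al2: "2 * al > 0" using al by simp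
  note d = DERIV_diff[OF DERIV_add[OF d1 DERIV_cmult[OF P_deriv[OF al x], of 2]] P_deriv[OF al2 x]]
  have gen: "1 * (1 - A)^2 + real (2::nat) * ((0 - al * p / x * A * (1 - w)) * (1 - A) ^ (2 - Suc 0)) * x
        + 2 * (al * p * A * (1 - w)) - 2 * al * p * (A * A) * (1 - w) = (1 - A)^2" for A w
  proof -
    have e0: "real (2::nat) * ((0 - K) * (1 - A) ^ (2 - Suc 0)) * x = - 2 * (1 - A) * (K * x)" for K
      by (simp add: algebra_simps)
    note e1 = e0[of "al * p / x * A * (1 - w)"]
    have e2: "(al * p / x * A * (1 - w)) * x = al * p * A * (1 - w)" using x by simp
    show ?thesis unfolding e1 e2 by (simp add: algebra_simps power2_eq_square)
  qed
  have g1: "gfun p q al x = al * p * Wf p q x powr al * (1 - Wf p q x)"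
    by (simp add: gfun_def)
  have g2: "gfun p q (2 * al) x = 2 * al * p * (Wf p q x powr al * Wf p q x powr al) * (1 - Wf p q x)"
  proof -
    have pw: "Wf p q x powr (2 * al) = Wf p q x powr al * Wf p q x powr al"
      by (metis mult_2 powr_add)
    show ?thesis unfolding gfun_def pw by simp
  qed
  show ?thesis unfolding Psi_def[abs_def]
    apply (rule DERIV_cong[OF d])
    apply (unfold g1 g2)
    apply (rule gen)
    done
qed

lemma Psi_cont: "continuous_on {0..B} (Psi al p q)"
proof -
  have c1: "continuous_on {0..B} (\<lambda>x. Wf p q x powr al)" by (rule Wpow_cont[OF p q]) (auto simp: al)
  have al2: "2 * al > 0" using al by simp
  show ?thesis unfolding Psi_def[abs_def]
    by (intro continuous_on_add continuous_on_diff continuous_on_mult continuous_on_power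
        continuous_on_const continuous_on_id c1 P_cont al al2)
qed

lemma Psi_0: "Psi al p q 0 = 0"
  by (simp add: Psi_def Pf_def)

lemma Psi_integral: assumes "0 \<le> a" "a \<le> b"
  shows "((\<lambda>x. (1 - Wf p q x powr al)^2) has_integral (Psi al p q b - Psi al p q a)) {a..b}"
proof (rule fundamental_theorem_of_calculus_interior[OF assms(2)])
  show "continuous_on {a..b} (Psi al p q)"
    by (rule continuous_on_subset[OF Psi_cont]) (use assms in auto)
  fix t assume "t \<in> {a<..<b}"
  then show "(Psi al p q has_vector_derivative (1 - Wf p q t powr al)^2) (at t)"
    using Psi_deriv[of t] assms by (simp add: has_real_derivative_iff_has_vector_derivative)
qed

lemma Psi_lim:
  "((\<lambda>b. Psi al p q b) \<longlongrightarrow> 0 + 2 * (al * q * Beta (al + 1/p) (1 - 1/p))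
      - (2*al) * q * Beta (2*al + 1/p) (1 - 1/p)) at_top"
proof -
  have l1: "((\<lambda>b. b * (1 - Wf p q b powr al)^2) \<longlongrightarrow> 0) at_top"
    unfolding Wf_def using p1 q al by real_asymp
  have al2: "2 * al > 0" using al by simp
  have l2: "((\<lambda>b. Pf p q al b) \<longlongrightarrow> al * q * Beta (al + 1/p) (1 - 1/p)) at_top"
    unfolding Pf_def using E_facts(2)[OF p1 q al] .
  have l3: "((\<lambda>b. Pf p q (2*al) b) \<longlongrightarrow> (2*al) * q * Beta (2*al + 1/p) (1 - 1/p)) at_top"
    unfolding Pf_def using E_facts(2)[OF p1 q al2] .
  show ?thesis unfolding Psi_def
    by (intro tendsto_intros l1 l2 l3)
qed

end


context
  fixes al p q y :: real
  assumes al: "al > 0" and p1: "p > 1" and q: "q > 0" and y: "y > 0"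
begin

lemma p0: "p > 0" using p1 by simp

definition "hfun x = (dagum_cdf al p q x - heaviside (x - y))^2"

lemma F_ge0: "x \<ge> 0 \<Longrightarrow> dagum_cdf al p q x = Wf p q x powr al"
  using cdf_eq[OF al p0 q] by simp

lemma h_neg: "x \<le> 0 \<Longrightarrow> hfun x = 0"
proof -
  assume x: "x \<le> 0"
  have "dagum_cdf al p q x = 0"
    using cdf_eq[OF al p0 q, of x] x W_0[OF p0 q] by (cases "x = 0") auto
  moreover have "heaviside (x - y) = 0" using x y by (simp add: heaviside_def)
  ultimately show ?thesis by (simp add: hfun_def)
qed

definition "K = 2 * Dfun al p q y - y"

lemma int_0y: "(hfun has_integral (Psi al p q y + K)) {0..y}"
proof -
  have c1: "((\<lambda>x. 1) has_integral y) {0..y}" using has_integral_const_real[of "1::real" 0 y] y by simp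
  have a: "((\<lambda>x. (1 - Wf p q x powr al)^2 + 2 * Wf p q x powr al - 1) has_integral
      ((Psi al p q y - Psi al p q 0) + 2 * Dfun al p q y - y)) {0..y}"
    by (intro has_integral_diff has_integral_add has_integral_mult_right c1
        Psi_integral[OF al p1 q] D_integral[OF al p0 q]) (use y in auto)
  have h1: "((\<lambda>x. (1 - Wf p q x powr al)^2 + 2 * Wf p q x powr al - 1) has_integral (Psi al p q y + K)) {0..y}"
  proof -
    have eq: "(Psi al p q y - Psi al p q 0) + 2 * Dfun al p q y - y = Psi al p q y + K"
      by (simp add: K_def Psi_0[OF al p1 q])
    show ?thesis using a unfolding eq .
  qed
  have h2: "hfun x = (1 - Wf p q x powr al)^2 + 2 * Wf p q x powr al - 1" if "x \<in> {0..y} - {y}" for x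
  proof -
    from that have x: "0 \<le> x" "x < y" by auto
    have hv: "heaviside (x - y) = 0" using x by (simp add: heaviside_def)
    have gen: "(1 - A)^2 + 2 * A - 1 = (A - 0)^2" for A :: real by (simp add: power2_eq_square algebra_simps)
    show ?thesis unfolding hfun_def F_ge0[OF x(1)] hv by (rule gen[symmetric])
  qed
  have fin: "finite {y}" by simp
  show ?thesis using has_integral_spike_finite_eq[of "{y}" "{0..y}" hfun, OF fin h2] h1 by blast
qed

lemma int_yb: assumes "y \<le> b" shows "(hfun has_integral (Psi al p q b - Psi al p q y)) {y..b}"
proof (rule has_integral_eq[OF _ Psi_integral[OF al p1 q, of y b]])
  fix x assume "x \<in> {y..b}"
  then have x: "0 \<le> x" "y \<le> x" using y by auto
  have hv: "heaviside (x - y) = 1" using x by (simp add: heaviside_def)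
  have gen: "(1 - A)^2 = (A - 1)^2" for A :: real by (simp add: power2_eq_square algebra_simps)
  show "(1 - Wf p q x powr al)^2 = hfun x"
    unfolding hfun_def F_ge0[OF x(1)] hv by (rule gen)
qed (use y assms in auto)

lemma int_0b: assumes "y \<le> b" shows "(hfun has_integral (Psi al p q b + K)) {0..b}"
proof -
  have "(hfun has_integral ((Psi al p q y + K) + (Psi al p q b - Psi al p q y))) {0..b}"
    by (rule has_integral_combine[OF _ assms int_0y int_yb[OF assms]]) (use y in auto)
  then show ?thesis by (simp add: algebra_simps)
qed

definition "T = 0 + 2 * (al * q * Beta (al + 1/p) (1 - 1/p)) - (2*al) * q * Beta (2*al + 1/p) (1 - 1/p) + K"

lemma h_0inf: "(hfun has_integral T) {0..}"
proof (rule has_integral_to_inf)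
  show "hfun integrable_on {0..b}" for b
  proof (cases "b \<le> y")
    case True
    have "{0..b} \<subseteq> {0..y}" using True by auto
    then show ?thesis using integrable_on_subinterval[OF has_integral_integrable[OF int_0y]] by blast
  next
    case False
    then show ?thesis using has_integral_integrable[OF int_0b[of b]] by simp
  qed
  have all: "\<forall>b\<ge>y. Psi al p q b + K = integral {0..b} hfun"
    using int_0b integral_unique by metis
  have ev: "eventually (\<lambda>b. Psi al p q b + K = integral {0..b} hfun) at_top"
    by (rule eventually_mono[OF eventually_ge_at_top[of y]]) (use all in auto)
  have "((\<lambda>b. Psi al p q b + K) \<longlongrightarrow> T) at_top"
    unfolding T_def by (intro tendsto_add Psi_lim[OF al p1 q] tendsto_const)
  then show "((\<lambda>b. integral {0..b} hfun) \<longlongrightarrow> T) at_top"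
    by (rule tendsto_cong[OF ev, THEN iffD1])
  show "\<And>x. 0 \<le> x \<Longrightarrow> 0 \<le> hfun x" unfolding hfun_def by (rule zero_le_power2)
qed

lemma h_univ: "(hfun has_integral T) UNIV"
proof -
  have z: "(hfun has_integral 0) {..0}" by (rule has_integral_is_0) (simp add: h_neg)
  have "(hfun has_integral (0 + T)) ({..0} \<union> {0..})"
    by (rule has_integral_Un[OF z h_0inf]) (auto intro: negligible_subset[of "{0}"])
  moreover have "{..0} \<union> {0..} = (UNIV :: real set)" by auto
  ultimately show ?thesis by simp
qed

end


lemma HH_eq: assumes "0 < al" "al < c" shows "HH al c z = hyp2F1 1 al c z"
  unfolding HH_def[OF assms] hyp2F1_def ca_def
  by (rule suminf_cong) (simp add: pochhammer_fact[symmetric])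

lemma Beta2: fixes al p q :: real assumes al: "al > 0" and p: "p > 1"
  shows "(2*al) * q * Beta (2*al + 1/p) (1 - 1/p) = q * (Gamma (1 - 1/p) * Gamma (2*al + 1/p) / Gamma (2*al))"
proof -
  have e: "2*al + 1/p + (1 - 1/p) = 2*al + 1" by simp
  have "2*al \<notin> \<int>\<^sub>\<le>\<^sub>0" using al nonpos_Ints_nonpos by force
  then have g: "Gamma (2*al + 1) = (2*al) * Gamma (2*al)" by (rule Gamma_plus1)
  have "Gamma (2*al) > 0" by (rule Gamma_real_pos) (use al in simp)
  then have g0: "Gamma (2*al) \<noteq> 0" by simp
  show ?thesis unfolding Beta_def e g using al g0 by (simp add: field_simps)
qed

theorem corollary2:
  fixes \<alpha> p q y :: real
  assumes "\<alpha> > 0" "p > 0" "q > 0" "p > 1" "y > 0"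
  defines "F \<equiv> dagum_cdf \<alpha> p q"
    and "\<mu> \<equiv> q * \<alpha> * Beta (\<alpha> + 1 / p) (1 - 1 / p)"
    and "w \<equiv> y powr p / (q powr p + y powr p)"
  shows "(\<lambda>x. (F x - heaviside (x - y))\<^sup>2) integrable_on UNIV
    \<and> crps F y = 2 * \<mu> - q * (Gamma (1 - 1 / p) * Gamma (2 * \<alpha> + 1 / p) / Gamma (2 * \<alpha>)) - y
        + 2 * y * (y powr p / (q powr p + y powr p)) powr (\<alpha> - 1)
          * (1 - q powr p / (q powr p + y powr p) * hyp2F1 1 \<alpha> (\<alpha> + 1 / p) w)"
proof -
  note al = assms(1) and p0 = assms(2) and q = assms(3) and p1 = assms(4) and y = assms(5)
  have hu: "(hfun \<alpha> p q y has_integral T \<alpha> p q y) UNIV" by (rule h_univ[OF al p1 q y])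
  have hf: "(\<lambda>x. (F x - heaviside (x - y))\<^sup>2) = hfun \<alpha> p q y"
    unfolding F_def by (rule ext) (simp add: hfun_def[OF al p1 q y])
  define W where "W = Wf p q y"
  have W: "W = w" unfolding W_def w_def by (rule W_eq[OF p0 q y])
  have Wpos: "0 < W" "W < 1" unfolding W_def using W_pos[OF p0 q y] W_lt1[OF p0 q] by auto
  have omw: "1 - W = q powr p / (q powr p + y powr p)"
  proof -
    have "q powr p + y powr p > 0" using q y by (simp add: add_pos_pos)
    then show ?thesis unfolding W w_def by (simp add: field_simps)
  qed
  define c where "c = \<alpha> + 1/p"
  have c: "\<alpha> < c" "c - \<alpha> = 1/p" using p0 by (auto simp: c_def)
  have I3': "1 - (1 - W) * HH \<alpha> c W = (1/p) * W * SS \<alpha> c W"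
    using I3[OF al c(1), of W] Wpos c(2) by simp
  have D: "2 * Dfun \<alpha> p q y = 2 * y * W powr (\<alpha> - 1) * (1 - (1 - W) * HH \<alpha> c W)"
  proof -
    have pw: "W powr \<alpha> = W powr (\<alpha> - 1) * W" using Wpos by (simp add: powr_diff)
    show ?thesis
      unfolding I3'
      unfolding Dfun_def c_def[symmetric] W_def[symmetric] pw by (simp add: mult_ac)
  qed
  have Tval: "T \<alpha> p q y = 2 * \<mu> - q * (Gamma (1 - 1 / p) * Gamma (2 * \<alpha> + 1 / p) / Gamma (2 * \<alpha>)) - y
        + 2 * y * (y powr p / (q powr p + y powr p)) powr (\<alpha> - 1)
          * (1 - q powr p / (q powr p + y powr p) * hyp2F1 1 \<alpha> (\<alpha> + 1 / p) w)"
    unfolding T_def[OF al p1 q y] K_def[OF al p1 q y] Beta2[OF al p1] D omw HH_eq[OF al c(1)]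
    unfolding W[symmetric] c_def \<mu>_def w_def[symmetric] W[symmetric]
    by (simp add: algebra_simps)
  show ?thesis
    unfolding hf crps_def using hu Tval by (simp add: integral_unique has_integral_integrable[OF hu])
qed


end
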